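(* Every $N$-affine equivariant additive integrator map $\phi$ is affine functionally equivariant: for all Banach spaces $Y,Z$, every affine map $F\colon Y\to Z$, and all $f^{[1]},\ldots,f^{[N]}\in\mathfrak X(Y)$, with $g^{[\nu]}(y,z)=\bigl(f^{[\nu]}(y),F'(y)f^{[\nu]}(y)\bigr)$, one has $\phi(f^{[1]},\ldots,f^{[N]})\sim_{(\mathrm{id},F)}\phi(g^{[1]},\ldots,g^{[N]})$.
   Context: All spaces are real Banach spaces; $\mathfrak X(Y)$ denotes smooth vector fields on $Y$. For fixed $N\in\mathbb N$, an additive integrator map $\phi$ is a collection of smooth maps $\phi_Y\colon\mathfrak X(Y)^N\to\mathfrak X(Y)$, one per Banach space $Y$. For Gâteaux differentiable $\chi\colon Y\to U$, $f\sim_\chi g$ means $\chi'(y)f(y)=g(\chi(y))$ for all $y$; $(\mathrm{id},F)(y)=(y,F(y))$. $\phi$ is $N$-affine equivariant if for every affine map $A$ between Banach spaces, $f^{[\nu]}\sim_A g^{[\nu]}$ for all $\nu$ implies $\phi(f^{[1]},\ldots,f^{[N]})\sim_A\phi(g^{[1]},\ldots,g^{[N]})$. *)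

theory Defs
  imports "HOL-Analysis.Analysis"
begin

text \<open>Smoothness in the Bastiani (= Michal-Bastiani / convenient) sense: all iterated
  directional derivatives exist everywhere and are jointly continuous in the base point and
  the directions. For maps between Banach spaces this C-infinity notion coincides with
  Frechet C-infinity. D k x v is the k-th directional derivative at x in the directions
  v 0, ..., v (k-1); the continuity clause forces it to depend only on those directions.\<close>
definition smooth_map :: "('a::real_normed_vector \<Rightarrow> 'b::real_normed_vector) \<Rightarrow> bool" where
  "smooth_map f \<longleftrightarrow> (\<exists>D :: nat \<Rightarrow> 'a \<Rightarrow> (nat \<Rightarrow> 'a) \<Rightarrow> 'b.
     (\<forall>x v. D 0 x v = f x) \<and>
     (\<forall>k x v. ((\<lambda>t. D k (x + t *\<^sub>R v k) v) has_vector_derivative D (Suc k) x v) (at 0)) \<and>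
     (\<forall>k x v xs vs. xs \<longlonglongrightarrow> x \<and> (\<forall>i<k. (\<lambda>n. vs n i) \<longlonglongrightarrow> v i)
        \<longrightarrow> (\<lambda>n. D k (xs n) (vs n)) \<longlonglongrightarrow> D k x v))"

definition related_by ::
  "('a::real_normed_vector \<Rightarrow> 'b::real_normed_vector) \<Rightarrow> ('a \<Rightarrow> 'a) \<Rightarrow> ('b \<Rightarrow> 'b) \<Rightarrow> bool" where
  "related_by chi f g \<longleftrightarrow>
     (\<forall>y. ((\<lambda>t. chi (y + t *\<^sub>R f y)) has_vector_derivative g (chi y)) (at 0))"

definition affine_map :: "('a::real_normed_vector \<Rightarrow> 'b::real_normed_vector) \<Rightarrow> bool" where
  "affine_map A \<longleftrightarrow> (\<exists>L c. bounded_linear L \<and> A = (\<lambda>x. L x + c))"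

text \<open>The component phi_Y of an additive integrator map on the space Y (= the type 'a):
  it maps N-tuples (lists of length N) of smooth vector fields to smooth vector fields.\<close>
definition integrator_component :: "nat \<Rightarrow> (('a::banach \<Rightarrow> 'a) list \<Rightarrow> ('a \<Rightarrow> 'a)) \<Rightarrow> bool" where
  "integrator_component N phi \<longleftrightarrow>
     (\<forall>fs. length fs = N \<and> (\<forall>f\<in>set fs. smooth_map f) \<longrightarrow> smooth_map (phi fs))"

definition affine_equivariant_between ::
  "nat \<Rightarrow> (('a::banach \<Rightarrow> 'a) list \<Rightarrow> ('a \<Rightarrow> 'a)) \<Rightarrow> (('b::banach \<Rightarrow> 'b) list \<Rightarrow> ('b \<Rightarrow> 'b)) \<Rightarrow> bool" where
  "affine_equivariant_between N phi1 phi2 \<longleftrightarrow>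
     (\<forall>A fs gs. affine_map A \<and> length fs = N \<and> length gs = N \<and>
        (\<forall>f\<in>set fs. smooth_map f) \<and> (\<forall>g\<in>set gs. smooth_map g) \<and>
        list_all2 (related_by A) fs gs
        \<longrightarrow> related_by A (phi1 fs) (phi2 gs))"

end

theory Submission
  imports Defs
begin

lemma smooth_lift:
  fixes f :: "'y::banach \<Rightarrow> 'y" and L :: "'y \<Rightarrow> 'z::banach"
  assumes sf: "smooth_map f" and L: "bounded_linear L"
  shows "smooth_map (\<lambda>(y::'y, z::'z). (f y, L (f y)))"
proof -
  obtain D :: "nat \<Rightarrow> 'y \<Rightarrow> (nat \<Rightarrow> 'y) \<Rightarrow> 'y" where
    D0: "\<forall>x v. D 0 x v = f x" and
    DS: "\<forall>k x v. ((\<lambda>t. D k (x + t *\<^sub>R v k) v) has_vector_derivative D (Suc k) x v) (at 0)" and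
    DC: "\<forall>k x v xs vs. xs \<longlonglongrightarrow> x \<and> (\<forall>i<k. (\<lambda>n. vs n i) \<longlonglongrightarrow> v i)
        \<longrightarrow> (\<lambda>n. D k (xs n) (vs n)) \<longlonglongrightarrow> D k x v"
    using sf unfolding smooth_map_def by blast
  define D' :: "nat \<Rightarrow> 'y \<times> 'z \<Rightarrow> (nat \<Rightarrow> 'y \<times> 'z) \<Rightarrow> 'y \<times> 'z" where
    "D' k p v = (D k (fst p) (fst \<circ> v), L (D k (fst p) (fst \<circ> v)))" for k p v
  show ?thesis unfolding smooth_map_def
  proof (intro exI[of _ D'] conjI allI impI)
    fix x :: "'y \<times> 'z" and v
    show "D' 0 x v = (case x of (y, z) \<Rightarrow> (f y, L (f y)))"
      using D0 by (simp add: D'_def case_prod_beta)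
  next
    fix k and x :: "'y \<times> 'z" and v :: "nat \<Rightarrow> 'y \<times> 'z"
    have h: "((\<lambda>t. D k (fst x + t *\<^sub>R (fst \<circ> v) k) (fst \<circ> v)) has_vector_derivative
              D (Suc k) (fst x) (fst \<circ> v)) (at 0)" using DS by blast
    have "((\<lambda>t. (D k (fst x + t *\<^sub>R (fst \<circ> v) k) (fst \<circ> v),
                 L (D k (fst x + t *\<^sub>R (fst \<circ> v) k) (fst \<circ> v)))) has_vector_derivative
              D' (Suc k) x v) (at 0)"
      unfolding D'_def
      by (intro has_vector_derivative_Pair h bounded_linear.has_vector_derivative[OF L])
    then show "((\<lambda>t. D' k (x + t *\<^sub>R v k) v) has_vector_derivative D' (Suc k) x v) (at 0)"
      by (simp add: D'_def)
  next
    fix k and x :: "'y \<times> 'z" and v :: "nat \<Rightarrow> 'y \<times> 'z" and xs vs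
    assume a: "xs \<longlonglongrightarrow> x \<and> (\<forall>i<k. (\<lambda>n. vs n i) \<longlonglongrightarrow> v i)"
    have "(\<lambda>n. fst (xs n)) \<longlonglongrightarrow> fst x" using a by (intro tendsto_fst) auto
    moreover have "\<forall>i<k. (\<lambda>n. (fst \<circ> vs n) i) \<longlonglongrightarrow> (fst \<circ> v) i"
      using a by (auto intro: tendsto_fst)
    ultimately have c: "(\<lambda>n. D k (fst (xs n)) (fst \<circ> vs n)) \<longlonglongrightarrow> D k (fst x) (fst \<circ> v)"
      using DC[rule_format, of "\<lambda>n. fst (xs n)" "fst x" k "\<lambda>n. fst \<circ> vs n" "fst \<circ> v"] by simp
    show "(\<lambda>n. D' k (xs n) (vs n)) \<longlonglongrightarrow> D' k x v"
      unfolding D'_def by (intro tendsto_Pair c bounded_linear.tendsto[OF L])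
  qed
qed

theorem proposition4p5:
  fixes N :: nat
    and phiY :: "('y::banach \<Rightarrow> 'y) list \<Rightarrow> ('y \<Rightarrow> 'y)"
    and phiYZ :: "('y \<times> 'z::banach \<Rightarrow> 'y \<times> 'z) list \<Rightarrow> ('y \<times> 'z \<Rightarrow> 'y \<times> 'z)"
    and F :: "'y \<Rightarrow> 'z" and L :: "'y \<Rightarrow> 'z" and c :: 'z
    and fs :: "('y \<Rightarrow> 'y) list"
  assumes "integrator_component N phiY"
    and "integrator_component N phiYZ"
    and "affine_equivariant_between N phiY phiY"
    and "affine_equivariant_between N phiY phiYZ"
    and "affine_equivariant_between N phiYZ phiY"
    and "affine_equivariant_between N phiYZ phiYZ"
    and "bounded_linear L" and "F = (\<lambda>y. L y + c)"
    and "length fs = N" and "\<forall>f\<in>set fs. smooth_map f"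
  shows "related_by (\<lambda>y. (y, F y)) (phiY fs)
           (phiYZ (map (\<lambda>f. \<lambda>(y, z). (f y, L (f y))) fs))"
proof -
  note L = assms(7)
  have aff: "affine_map (\<lambda>y. (y, F y))"
    unfolding affine_map_def assms(8)
    by (intro exI[of _ "\<lambda>y. (y, L y)"] exI[of _ "(0, c)"] conjI
        bounded_linear_Pair bounded_linear_ident L) simp
  have rel: "related_by (\<lambda>y. (y, F y)) f (\<lambda>(y, z::'z). (f y, L (f y)))" for f :: "'y \<Rightarrow> 'y"
  proof -
    have "((\<lambda>t. (y + t *\<^sub>R f y, L (y + t *\<^sub>R f y) + c)) has_vector_derivative (f y, L (f y))) (at 0)"
      for y
    proof -
      have "((\<lambda>t. y + t *\<^sub>R f y) has_vector_derivative f y) (at 0)"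
        using has_vector_derivative_add[OF has_vector_derivative_const
            bounded_linear.has_vector_derivative[OF bounded_linear_scaleR_left[of "f y"] has_vector_derivative_id]]
        by simp
      then show ?thesis
        by (intro has_vector_derivative_Pair has_vector_derivative_add_const[THEN iffD2] bounded_linear.has_vector_derivative[OF L])
    qed
    then show ?thesis unfolding related_by_def assms(8) by simp
  qed
  have sm: "\<forall>g\<in>set (map (\<lambda>f. \<lambda>(y, z::'z). (f y, L (f y))) fs). smooth_map g"
    using assms(10) by (auto intro!: smooth_lift L)
  have la: "list_all2 (related_by (\<lambda>y. (y, F y))) fs (map (\<lambda>f. \<lambda>(y, z::'z). (f y, L (f y))) fs)"
    by (simp add: list_all2_conv_all_nth rel)
  have "affine_map (\<lambda>y. (y, F y)) \<and> length fs = N \<and>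
      length (map (\<lambda>f. \<lambda>(y, z::'z). (f y, L (f y))) fs) = N \<and>
      (\<forall>f\<in>set fs. smooth_map f) \<and> (\<forall>g\<in>set (map (\<lambda>f. \<lambda>(y, z::'z). (f y, L (f y))) fs). smooth_map g) \<and>
      list_all2 (related_by (\<lambda>y. (y, F y))) fs (map (\<lambda>f. \<lambda>(y, z::'z). (f y, L (f y))) fs)"
    using aff assms(9,10) sm la by simp
  then show ?thesis
    using assms(4)[unfolded affine_equivariant_between_def, rule_format,
        of "\<lambda>y. (y, F y)" fs "map (\<lambda>f. \<lambda>(y, z::'z). (f y, L (f y))) fs"]
    by blast
qed

end
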